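(* For every $x\in\mathcal{L}_q\cup\mathcal{T}_q$, $\mu^{-1}(\mu(x))=x$.
   Context: Let $S_b=(F_b,P_b,V_\infty,\delta_b)$ be a first-order signature ($F_b$ function symbols, constants being $0$-ary functions; $P_b$ predicate symbols; $V_\infty$ an infinite set of variables; $\delta_b$ the arities). Formulas are built from atoms with $\neg,\wedge,\forall$. Fix a finite set $V\subseteq V_\infty$ of "quotable variables". The augmented signature $S$ has predicate symbols $P=P_b\sqcup\{\mathbf{T}\}$ ($\mathbf{T}$ unary) and function symbols $F=F_b\sqcup\underline{F}\sqcup\underline{P}\sqcup\underline{V}\sqcup\{\underline{\wedge},\underline{\neg},\underline{\forall},\mathrm{quote}\}$, where $\underline{F}=\{\underline{f}:f\in F_b\}$ ($\underline f$ has the arity of $f$), $\underline{P}=\{\underline{p}:p\in P\}$ ($\underline p$ is a function symbol with the arity of $p$), $\underline{V}=\{\underline{x}:x\in V\}$ (constants), $\underline\wedge,\underline\forall$ binary, $\underline\neg,\mathrm{quote}$ unary; all new symbols are fresh. The set $\mathcal{Q}$ is the least set of terms containing each $\underline x\in\underline V$ and closed under forming $\underline f(t_1,\dots,t_n)$ ($\underline f\in\underline F$), $\underline p(t_1,\dots,t_n)$ ($\underline p\in\underline P$), $\underline\wedge(t_1,t_2)$, $\underline\neg(t)$, $\underline\forall(\underline x,t)$ ($\underline x\in\underline V$), $\mathrm{quote}(t)$, for $t,t_i\in\mathcal{Q}$. The set $\mathcal Q_v$ is defined identically but additionally contains $\mathrm{quote}(x)$ for each variable $x\in V$ (closed under the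 same constructors). The sets $\mathcal{T}_q$ (quotable terms), $\mathcal{L}_q$ (quotable formulas) and the map $\mu$ are defined by simultaneous induction: $\mathcal T_q$ contains every variable $x\in V$, every $f(t_1,\dots,t_n)$ with $f\in F_b$, $t_i\in\mathcal T_q$, and every term $\mu(e)$ with $e\in\mathcal T_q\cup\mathcal L_q$; $\mathcal L_q$ contains $p(t_1,\dots,t_n)$ with $p\in P_b$, $t_i\in\mathcal T_q$, and $\forall x.\varphi$ ($x\in V$), $\neg\varphi$, $\varphi_1\wedge\varphi_2$ for $\varphi,\varphi_i\in\mathcal L_q$. The quotation map is: $\mu(f(t_1,\dots,t_n))=\underline f(\mu(t_1),\dots,\mu(t_n))$ for $f\in F_b$; $\mu(t_q)=\mathrm{quote}(t_q)$ for $t_q\in\mathcal Q$; $\mu(p(t_1,\dots,t_n))=\underline p(\mu(t_1),\dots,\mu(t_n))$; $\mu(x)=\underline x$; $\mu(\varphi_1\wedge\varphi_2)=\underline\wedge(\mu(\varphi_1),\mu(\varphi_2))$; $\mu(\neg\varphi)=\underline\neg(\mu(\varphi))$; $\mu(\forall x.\varphi)=\underline\forall(\underline x,\mu(\varphi))$. Quoted substitution: for a term $t$ and $x\in V$, $z[\underline x\leftarrow t]_q$ is defined on $z\in\mathcal Q_v$ by: $\underline x[\underline x\leftarrow t]_q=t$; $\underline y[\underline x\leftarrow t]_q=\underline y$ for $\underline y\ne\underline x$; it commutes with $\underline f\in\underline F$, $\underline p\in\underline P$, $\underline\wedge$ and $\underline\neg$ (applied to each argument); $\underline\forall(t_1,t_2)[\underline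 x\leftarrow t]_q=\underline\forall(t_1[\underline x\leftarrow t]_q,t_2[\underline x\leftarrow t]_q)$ if $t_1\neq\underline x$; $\underline\forall(\underline x,t_2)[\underline x\leftarrow t]_q=\underline\forall(\underline x,t_2)$; in all other cases (e.g. $\mathrm{quote}(s)$) the term is unchanged. The unquote operator $\mu^{-1}$ on $\mathcal Q_v$: $\mu^{-1}(\underline f(t_1,\dots,t_n))=f(\mu^{-1}(t_1),\dots,\mu^{-1}(t_n))$; $\mu^{-1}(\underline p(t_1,\dots,t_n))=p(\mu^{-1}(t_1),\dots,\mu^{-1}(t_n))$; $\mu^{-1}(\mathrm{quote}(t))=t$; $\mu^{-1}(\varphi_1\underline\wedge\varphi_2)=\mu^{-1}(\varphi_1)\wedge\mu^{-1}(\varphi_2)$; $\mu^{-1}(\underline\neg\varphi)=\neg\mu^{-1}(\varphi)$; $\mu^{-1}(\underline\forall(\underline x,\varphi))=\forall x.\ \mu^{-1}(\varphi[\underline x\leftarrow\mathrm{quote}(x)]_q)$; $\mu^{-1}(\underline x)=x$; $\mu^{-1}(t)=t$ in all other cases. *)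

theory Defs
  imports Main
begin

text \<open>Terms and formulas live in one
datatype; the sets Tq and Lq below carve out the well-formed quotable terms and
formulas.  Predicate symbols of S are 'p option: Some p is a base predicate,
None is the truth predicate T (arity 1).\<close>

datatype ('f, 'p, 'v) expr =
    Var 'v
  | Fn 'f "('f, 'p, 'v) expr list"
  | QFn 'f "('f, 'p, 'v) expr list"
  | QPred "'p option" "('f, 'p, 'v) expr list"
  | QVar 'v
  | QAnd "('f, 'p, 'v) expr" "('f, 'p, 'v) expr"
  | QNeg "('f, 'p, 'v) expr"
  | QAll "('f, 'p, 'v) expr" "('f, 'p, 'v) expr"
  | Quote "('f, 'p, 'v) expr"
  | Pred "'p option" "('f, 'p, 'v) expr list"
  | Neg "('f, 'p, 'v) expr"
  | And "('f, 'p, 'v) expr" "('f, 'p, 'v) expr"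
  | All 'v "('f, 'p, 'v) expr"

definition arP :: "('p \<Rightarrow> nat) \<Rightarrow> 'p option \<Rightarrow> nat" where
  "arP arp p = (case p of None \<Rightarrow> 1 | Some q \<Rightarrow> arp q)"

inductive_set Qset :: "'v set \<Rightarrow> ('f \<Rightarrow> nat) \<Rightarrow> ('p \<Rightarrow> nat) \<Rightarrow> ('f, 'p, 'v) expr set"
  for V arf arp where
  qvar: "x \<in> V \<Longrightarrow> QVar x \<in> Qset V arf arp"
| qfn: "length ts = arf f \<Longrightarrow> (\<forall>t\<in>set ts. t \<in> Qset V arf arp) \<Longrightarrow> QFn f ts \<in> Qset V arf arp"
| qpred: "length ts = arP arp p \<Longrightarrow> (\<forall>t\<in>set ts. t \<in> Qset V arf arp) \<Longrightarrow> QPred p ts \<in> Qset V arf arp"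
| qand: "t1 \<in> Qset V arf arp \<Longrightarrow> t2 \<in> Qset V arf arp \<Longrightarrow> QAnd t1 t2 \<in> Qset V arf arp"
| qneg: "t \<in> Qset V arf arp \<Longrightarrow> QNeg t \<in> Qset V arf arp"
| qall: "x \<in> V \<Longrightarrow> t \<in> Qset V arf arp \<Longrightarrow> QAll (QVar x) t \<in> Qset V arf arp"
| quote: "t \<in> Qset V arf arp \<Longrightarrow> Quote t \<in> Qset V arf arp"

text \<open>The quotation map mu.  On the quotable terms/formulas the catch-all clause
applies exactly to the elements of Q, where mu(t_q) = quote(t_q).\<close>
fun mu :: "('f, 'p, 'v) expr \<Rightarrow> ('f, 'p, 'v) expr" where
  "mu (Fn f ts) = QFn f (map mu ts)"
| "mu (Pred p ts) = QPred p (map mu ts)"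
| "mu (Var x) = QVar x"
| "mu (And a b) = QAnd (mu a) (mu b)"
| "mu (Neg a) = QNeg (mu a)"
| "mu (All x a) = QAll (QVar x) (mu a)"
| "mu e = Quote e"

inductive Tq and Lq for V :: "'v set" and arf :: "'f \<Rightarrow> nat" and arp :: "'p \<Rightarrow> nat" where
  tvar: "x \<in> V \<Longrightarrow> Tq V arf arp (Var x)"
| tfn: "length ts = arf f \<Longrightarrow> (\<forall>t\<in>set ts. Tq V arf arp t) \<Longrightarrow> Tq V arf arp (Fn f ts)"
| tmu: "Tq V arf arp e \<or> Lq V arf arp e \<Longrightarrow> Tq V arf arp (mu e)"
| lpred: "length ts = arp p \<Longrightarrow> (\<forall>t\<in>set ts. Tq V arf arp t) \<Longrightarrow> Lq V arf arp (Pred (Some p) ts)"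
| lall: "x \<in> V \<Longrightarrow> Lq V arf arp a \<Longrightarrow> Lq V arf arp (All x a)"
| lneg: "Lq V arf arp a \<Longrightarrow> Lq V arf arp (Neg a)"
| land: "Lq V arf arp a \<Longrightarrow> Lq V arf arp b \<Longrightarrow> Lq V arf arp (And a b)"

fun qsubst :: "'v \<Rightarrow> ('f, 'p, 'v) expr \<Rightarrow> ('f, 'p, 'v) expr \<Rightarrow> ('f, 'p, 'v) expr" where
  "qsubst x t (QVar y) = (if y = x then t else QVar y)"
| "qsubst x t (QFn f ts) = QFn f (map (qsubst x t) ts)"
| "qsubst x t (QPred p ts) = QPred p (map (qsubst x t) ts)"
| "qsubst x t (QAnd a b) = QAnd (qsubst x t a) (qsubst x t b)"
| "qsubst x t (QNeg a) = QNeg (qsubst x t a)"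
| "qsubst x t (QAll t1 t2) =
     (if t1 = QVar x then QAll t1 t2 else QAll (qsubst x t t1) (qsubst x t t2))"
| "qsubst x t z = z"

text \<open>Size measure not looking inside quote (used for termination of unquote).\<close>
primrec qsize :: "('f, 'p, 'v) expr \<Rightarrow> nat" where
  "qsize (Var x) = 1"
| "qsize (Fn f ts) = Suc (sum_list (map qsize ts))"
| "qsize (QFn f ts) = Suc (sum_list (map qsize ts))"
| "qsize (QPred p ts) = Suc (sum_list (map qsize ts))"
| "qsize (QVar x) = 1"
| "qsize (QAnd a b) = Suc (qsize a + qsize b)"
| "qsize (QNeg a) = Suc (qsize a)"
| "qsize (QAll a b) = Suc (qsize a + qsize b)"
| "qsize (Quote a) = 1"
| "qsize (Pred p ts) = Suc (sum_list (map qsize ts))"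
| "qsize (Neg a) = Suc (qsize a)"
| "qsize (And a b) = Suc (qsize a + qsize b)"
| "qsize (All x a) = Suc (qsize a)"

lemma qsize_qsubst: "qsize t = 1 \<Longrightarrow> qsize (qsubst x t e) = qsize e"
proof (induction e)
  case (QFn f ts) then show ?case by (simp cong: map_cong)
next
  case (QPred p ts) then show ?case by (simp cong: map_cong)
qed auto

lemma qsize_elem: "t \<in> set ts \<Longrightarrow> qsize t \<le> sum_list (map qsize ts)"
  by (induction ts) auto

function unq :: "('f, 'p, 'v) expr \<Rightarrow> ('f, 'p, 'v) expr" where
  "unq (QFn f ts) = Fn f (map unq ts)"
| "unq (QPred p ts) = Pred p (map unq ts)"
| "unq (Quote t) = t"
| "unq (QAnd a b) = And (unq a) (unq b)"
| "unq (QNeg a) = Neg (unq a)"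
| "unq (QAll (QVar x) a) = All x (unq (qsubst x (Quote (Var x)) a))"
| "unq (QVar x) = Var x"
| "unq (Var x) = Var x"
| "unq (Fn f ts) = Fn f ts"
| "unq (QAll (Var v) a) = QAll (Var v) a"
| "unq (QAll (Fn f ts) a) = QAll (Fn f ts) a"
| "unq (QAll (QFn f ts) a) = QAll (QFn f ts) a"
| "unq (QAll (QPred p ts) a) = QAll (QPred p ts) a"
| "unq (QAll (QAnd b c) a) = QAll (QAnd b c) a"
| "unq (QAll (QNeg b) a) = QAll (QNeg b) a"
| "unq (QAll (QAll b c) a) = QAll (QAll b c) a"
| "unq (QAll (Quote b) a) = QAll (Quote b) a"
| "unq (QAll (Pred p ts) a) = QAll (Pred p ts) a"
| "unq (QAll (Neg b) a) = QAll (Neg b) a"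
| "unq (QAll (And b c) a) = QAll (And b c) a"
| "unq (QAll (All y b) a) = QAll (All y b) a"
| "unq (Pred p ts) = Pred p ts"
| "unq (Neg a) = Neg a"
| "unq (And a b) = And a b"
| "unq (All x a) = All x a"
  by pat_completeness auto
termination
  by (relation "measure qsize")
     (auto simp: qsize_qsubst dest: qsize_elem)

end

theory Submission
  imports Defs
begin

fun qs :: "'v set \<Rightarrow> ('f, 'p, 'v) expr \<Rightarrow> ('f, 'p, 'v) expr" where
  "qs S (QVar y) = (if y \<in> S then Quote (Var y) else QVar y)"
| "qs S (QFn f ts) = QFn f (map (qs S) ts)"
| "qs S (QPred p ts) = QPred p (map (qs S) ts)"
| "qs S (QAnd a b) = QAnd (qs S a) (qs S b)"
| "qs S (QNeg a) = QNeg (qs S a)"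
| "qs S (QAll t1 t2) = (case t1 of QVar y \<Rightarrow> QAll t1 (qs (S - {y}) t2)
                        | _ \<Rightarrow> QAll (qs S t1) (qs S t2))"
| "qs S z = z"

lemma qs_QAll_QVar: "qs S (QAll (QVar x) t2) = QAll (QVar x) (qs (S - {x}) t2)" by simp
lemma qsubst_QAll_same: "qsubst x t (QAll (QVar x) t2) = QAll (QVar x) t2" by simp

lemma qs_not_qvar: "(\<forall>y. t \<noteq> QVar y) \<Longrightarrow> qs S t \<noteq> QVar y"
  by (cases t) (simp_all split: expr.split)

lemma qsubst_qs: "qsubst x (Quote (Var x)) (qs S t) = qs (insert x S) t"
proof (induction t arbitrary: S)
  case (QFn f ts) then show ?case by (simp cong: map_cong)
next
  case (QPred p ts) then show ?case by (simp cong: map_cong)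
next
  case (QAll t1 t2)
  show ?case
  proof (cases "\<exists>y. t1 = QVar y")
    case True
    then obtain y where y: "t1 = QVar y" by blast
    show ?thesis
    proof (cases "y = x")
      case True
      have e: "insert x S - {x} = S - {x}" by blast
      have t1: "t1 = QVar x" using y True by simp
      show ?thesis unfolding t1 qs_QAll_QVar qsubst_QAll_same e ..
    next
      case False
      then show ?thesis using y QAll.IH(2)[of "S - {y}"] by (simp add: insert_Diff_if)
    qed
  next
    case False
    then have nv: "\<forall>y. t1 \<noteq> QVar y" by simp
    have "\<forall>y. qs S t1 \<noteq> QVar y" by (simp add: qs_not_qvar[OF nv])
    moreover have "qs S (QAll t1 t2) = QAll (qs S t1) (qs S t2)"
      "qs (insert x S) (QAll t1 t2) = QAll (qs (insert x S) t1) (qs (insert x S) t2)"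
      using False by (cases t1; simp)+
    ultimately show ?thesis using QAll.IH by simp
  qed
next
  case (Var y) show ?case by simp
next
  case (QVar y) show ?case by simp
next
  case (Quote y) show ?case by simp
next
  case (Fn f y) show ?case by simp
next
  case (All f y) show ?case by simp
next
  case (Pred f y) show ?case by simp
next
  case (Neg y) show ?case by simp
next
  case (And y z) show ?case by simp
next
  case (QNeg y) then show ?case by simp
next
  case (QAnd y z) then show ?case by simp
qed

lemma mu_mu: "mu (mu e) = Quote (mu e)"
  by (cases e) auto

lemma main:
  "(Tq V arf arp e \<longrightarrow> (\<forall>S. unq (qs S (mu e)) = e)) \<and>
   (Lq V arf arp e \<longrightarrow> (\<forall>S. unq (qs S (mu e)) = e))"
proof -
  have "(Tq V arf arp e \<Longrightarrow> (\<forall>S. unq (qs S (mu e)) = e))"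
   and "(Lq V arf arp e' \<Longrightarrow> (\<forall>S. unq (qs S (mu e')) = e'))" for e e'
  proof (induction e and e' rule: Tq_Lq.inducts)
    case (tfn ts f)
    then show ?case by (simp add: map_idI)
  next
    case (tmu e)
    then show ?case by (simp add: mu_mu)
  next
    case (lpred ts p)
    then show ?case by (simp add: map_idI)
  next
    case (lall x a)
    then show ?case by (simp add: qsubst_qs insert_Diff_if)
  next
    case (tvar x) then show ?case by simp
  next
    case (lneg a) then show ?case by simp
  next
    case (land a b) then show ?case by simp
  qed
  then show ?thesis by blast
qed

lemma qs_empty: "qs {} t = t"
proof (induction t)
  case (QAll t1 t2) then show ?case by (cases t1) simp_all
qed (simp_all add: map_idI)

theorem proposition4p16:
  fixes V :: "'v set" and arf :: "'f \<Rightarrow> nat" and arp :: "'p \<Rightarrow> nat"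
    and x :: "('f, 'p, 'v) expr"
  assumes "infinite (UNIV :: 'v set)" and "finite V"
    and "Lq V arf arp x \<or> Tq V arf arp x"
  shows "unq (mu x) = x"
proof -
  have "unq (qs {} (mu x)) = x" using main[of V arf arp x] assms(3) by blast
  then show ?thesis by (simp add: qs_empty)
qed

end
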